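(* Let $Q$ be a quiver whose underlying graph is a Dynkin diagram of type $A$, $D$ or $E$, with vertex set $I$. Let $A=\Pi_Q$ be its preprojective algebra over $\mathbb{C}$, graded by path length. Let $\theta_0\in HH^1(A)$ be the class of the derivation $D:A\to A$ determined by $D(e_i)=0$ for $i\in I$, $D(a)=0$ for $a\in Q$, and $D(a^* )=a^*$ for $a^*\in Q^*$. Equivalently, $D(b)=s(b)\,b$ for every path $b$, where $s(b)$ is the number of arrows of $b$ that lie in $Q^*$. Then for every $i\ge 0$ and every homogeneous $x\in HH_i(A)$ of degree $\deg(x)$, the Lie derivative satisfies $$\mathcal{L}_{\theta_0}(x)=\frac{\deg(x)}{2}\,x .$$
   Context: Let $Q$ be a quiver. Its double $\bar Q=Q\cup Q^*$ is obtained by adjoining, for each arrow $a\in Q$, a reversed arrow $a^*$. The path algebra $\mathbb{C}\bar Q$ has as basis all paths in $\bar Q$, including the trivial paths $e_i$ for $i\in I$. The product of two paths is their concatenation when they are compatible, and $0$ otherwise. The preprojective algebra is $\Pi_Q=\mathbb{C}\bar Q/\big(\sum_{a\in Q}(aa^*-a^*a)\big)$. It is graded by path length, with arrows in degree $1$. For $Q$ of ADE type it is finite dimensional. The defining relation is homogeneous in the number of $Q^*$-arrows, so $D$ is a well-defined derivation. $HH^\bullet(A)$ and $HH_\bullet(A)$ denote Hochschild cohomology and Hochschild homology of $A$ with coefficients in $A$. $HH_\bullet(A)$ carries the internal grading induced from the grading of $A$: a chain $a_0\otimes a_1\otimes\cdots\otimes a_n$ of homogeneous elements has degree $\sum_j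 \deg a_j$. For a derivation $D$ (a Hochschild $1$-cocycle), the Lie derivative acts on Hochschild chains by $\mathcal{L}_D(a_0\otimes\cdots\otimes a_n)=\sum_{j=0}^n a_0\otimes\cdots\otimes D(a_j)\otimes\cdots\otimes a_n$. This induces the action $\mathcal{L}_{\theta_0}$ on $HH_\bullet(A)$, which is part of the standard calculus structure (Daletski–Gelfand–Tsygan) on the pair $(HH^\bullet(A),HH_\bullet(A))$. *)

theory Defs
  imports Complex_Main
begin

datatype dynkin_type = TypeA | TypeD | TypeE

definition dynkin_ok :: "dynkin_type \<Rightarrow> nat \<Rightarrow> bool" where
  "dynkin_ok T n = (case T of TypeA \<Rightarrow> n \<ge> 1 | TypeD \<Rightarrow> n \<ge> 4 | TypeE \<Rightarrow> n \<in> {6,7,8})"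

definition path_edges :: "nat \<Rightarrow> nat set set" where
  "path_edges m = {{i, Suc i} | i. Suc i < m}"

definition dynkin_edges :: "dynkin_type \<Rightarrow> nat \<Rightarrow> nat set set" where
  "dynkin_edges T n = (case T of
      TypeA \<Rightarrow> path_edges n
    | TypeD \<Rightarrow> path_edges (n - 1) \<union> {{n - 3, n - 1}}
    | TypeE \<Rightarrow> path_edges (n - 1) \<union> {{2, n - 1}})"

definition dynkin_quiver :: "'v set \<Rightarrow> 'a set \<Rightarrow> ('a \<Rightarrow> 'v) \<Rightarrow> ('a \<Rightarrow> 'v) \<Rightarrow> bool" where
  "dynkin_quiver I Arr src tgt \<longleftrightarrow>
     (\<forall>a\<in>Arr. src a \<in> I \<and> tgt a \<in> I) \<and>
     (\<exists>T n \<phi>. dynkin_ok T n \<and> bij_betw \<phi> I {..<n} \<and>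
        bij_betw (\<lambda>a. {\<phi> (src a), \<phi> (tgt a)}) Arr (dynkin_edges T n))"

text \<open>Arrows of the double quiver: (a, False) is a, (a, True) is a*.
  A path is (v, xs): start vertex v followed by the arrows xs, read left to right;
  (v, []) is the trivial path e_v.\<close>
type_synonym ('v, 'a) path = "'v \<times> ('a \<times> bool) list"

definition dsrc :: "('a \<Rightarrow> 'v) \<Rightarrow> ('a \<Rightarrow> 'v) \<Rightarrow> 'a \<times> bool \<Rightarrow> 'v" where
  "dsrc src tgt x = (if snd x then tgt (fst x) else src (fst x))"

definition dtgt :: "('a \<Rightarrow> 'v) \<Rightarrow> ('a \<Rightarrow> 'v) \<Rightarrow> 'a \<times> bool \<Rightarrow> 'v" where
  "dtgt src tgt x = (if snd x then src (fst x) else tgt (fst x))"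

fun walk :: "('a \<Rightarrow> 'v) \<Rightarrow> ('a \<Rightarrow> 'v) \<Rightarrow> 'v \<Rightarrow> ('a \<times> bool) list \<Rightarrow> bool" where
  "walk src tgt v [] = True"
| "walk src tgt v (x # xs) = (dsrc src tgt x = v \<and> walk src tgt (dtgt src tgt x) xs)"

definition valid_path :: "'v set \<Rightarrow> 'a set \<Rightarrow> ('a \<Rightarrow> 'v) \<Rightarrow> ('a \<Rightarrow> 'v) \<Rightarrow> ('v, 'a) path \<Rightarrow> bool" where
  "valid_path I Arr src tgt p \<longleftrightarrow>
     fst p \<in> I \<and> (\<forall>x\<in>set (snd p). fst x \<in> Arr) \<and> walk src tgt (fst p) (snd p)"

definition endv :: "('a \<Rightarrow> 'v) \<Rightarrow> ('a \<Rightarrow> 'v) \<Rightarrow> ('v, 'a) path \<Rightarrow> 'v" where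
  "endv src tgt p = (if snd p = [] then fst p else dtgt src tgt (last (snd p)))"

text \<open>Product of two paths: concatenation if compatible, otherwise zero (None).\<close>
definition pcat :: "('a \<Rightarrow> 'v) \<Rightarrow> ('a \<Rightarrow> 'v) \<Rightarrow> ('v, 'a) path \<Rightarrow> ('v, 'a) path \<Rightarrow> ('v, 'a) path option" where
  "pcat src tgt p q = (if endv src tgt p = fst q then Some (fst p, snd p @ snd q) else None)"

definition pcat3 :: "('a \<Rightarrow> 'v) \<Rightarrow> ('a \<Rightarrow> 'v) \<Rightarrow> ('v, 'a) path \<Rightarrow> ('v, 'a) path \<Rightarrow> ('v, 'a) path
    \<Rightarrow> ('v, 'a) path option" where
  "pcat3 src tgt p m q = Option.bind (pcat src tgt p m) (\<lambda>pm. pcat src tgt pm q)"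

text \<open>Chains in (C Qbar)^{\<otimes>(n+1)}: finitely supported complex functions on
  (n+1)-tuples (lists) of paths of the double quiver.  The Hochschild chain group
  C_n(Pi_Q) = Pi_Q^{\<otimes>(n+1)} is the quotient of this by the subspace
  rel_span n (tensors with one slot in the ideal J generated by rho).\<close>
type_synonym ('v, 'a) chain = "('v, 'a) path list \<Rightarrow> complex"

definition is_chain :: "'v set \<Rightarrow> 'a set \<Rightarrow> ('a \<Rightarrow> 'v) \<Rightarrow> ('a \<Rightarrow> 'v) \<Rightarrow> nat \<Rightarrow> ('v, 'a) chain \<Rightarrow> bool" where
  "is_chain I Arr src tgt n z \<longleftrightarrow> finite {t. z t \<noteq> 0} \<and>
     (\<forall>t. z t \<noteq> 0 \<longrightarrow> length t = Suc n \<and> (\<forall>p\<in>set t. valid_path I Arr src tgt p))"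

definition in_span :: "('v, 'a) chain set \<Rightarrow> ('v, 'a) chain \<Rightarrow> bool" where
  "in_span G x \<longleftrightarrow> (\<exists>S c. finite S \<and> S \<subseteq> G \<and> x = (\<lambda>u. \<Sum>g\<in>S. c g * g u))"

text \<open>Generator of the relation subspace: the tuple t with slot j replaced by
  p * rho * q, where rho = sum over a of (a a* - a* a).\<close>
definition rel_gen :: "'a set \<Rightarrow> ('a \<Rightarrow> 'v) \<Rightarrow> ('a \<Rightarrow> 'v) \<Rightarrow> ('v, 'a) path list \<Rightarrow> nat
    \<Rightarrow> ('v, 'a) path \<Rightarrow> ('v, 'a) path \<Rightarrow> ('v, 'a) chain" where
  "rel_gen Arr src tgt t j p q = (\<lambda>u. \<Sum>a\<in>Arr.
      (case pcat3 src tgt p (src a, [(a, False), (a, True)]) q of None \<Rightarrow> 0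
         | Some r \<Rightarrow> if u = t[j := r] then 1 else 0)
    - (case pcat3 src tgt p (tgt a, [(a, True), (a, False)]) q of None \<Rightarrow> 0
         | Some r \<Rightarrow> if u = t[j := r] then 1 else 0))"

definition rel_span :: "'v set \<Rightarrow> 'a set \<Rightarrow> ('a \<Rightarrow> 'v) \<Rightarrow> ('a \<Rightarrow> 'v) \<Rightarrow> nat \<Rightarrow> ('v, 'a) chain set" where
  "rel_span I Arr src tgt n = {rel_gen Arr src tgt t j p q | t j p q.
      length t = Suc n \<and> j \<le> n \<and> (\<forall>x\<in>set t. valid_path I Arr src tgt x) \<and>
      valid_path I Arr src tgt p \<and> valid_path I Arr src tgt q}"

definition bterm :: "('a \<Rightarrow> 'v) \<Rightarrow> ('a \<Rightarrow> 'v) \<Rightarrow> ('v, 'a) path list \<Rightarrow> ('v, 'a) chain" where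
  "bterm src tgt t = (\<lambda>u.
      (\<Sum>j<length t - 1. (case pcat src tgt (t ! j) (t ! Suc j) of None \<Rightarrow> 0
          | Some r \<Rightarrow> if u = take j t @ r # drop (Suc (Suc j)) t then (-1) ^ j else 0))
    + (if 2 \<le> length t then (case pcat src tgt (last t) (hd t) of None \<Rightarrow> 0
          | Some r \<Rightarrow> if u = r # butlast (tl t) then (-1) ^ (length t - 1) else 0) else 0))"

definition hbnd :: "('a \<Rightarrow> 'v) \<Rightarrow> ('a \<Rightarrow> 'v) \<Rightarrow> ('v, 'a) chain \<Rightarrow> ('v, 'a) chain" where
  "hbnd src tgt z = (\<lambda>u. \<Sum>t\<in>{t. z t \<noteq> 0}. z t * bterm src tgt t u)"

definition tdeg :: "('v, 'a) path list \<Rightarrow> nat" where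
  "tdeg t = (\<Sum>p\<leftarrow>t. length (snd p))"

definition star_count :: "('v, 'a) path list \<Rightarrow> nat" where
  "star_count t = (\<Sum>p\<leftarrow>t. length (filter snd (snd p)))"

definition homog :: "nat \<Rightarrow> ('v, 'a) chain \<Rightarrow> bool" where
  "homog d z \<longleftrightarrow> (\<forall>t. z t \<noteq> 0 \<longrightarrow> tdeg t = d)"

definition lie_D :: "('v, 'a) chain \<Rightarrow> ('v, 'a) chain" where
  "lie_D z = (\<lambda>t. of_nat (star_count t) * z t)"

end

theory Submission
  imports Defs
begin


definition sng :: "'x \<Rightarrow> 'x \<Rightarrow> complex" where
  "sng t u = (if u = t then 1 else 0)"

definition lin :: "('x \<Rightarrow> 'y \<Rightarrow> complex) \<Rightarrow> ('x \<Rightarrow> complex) \<Rightarrow> 'y \<Rightarrow> complex" where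
  "lin F z u = (\<Sum>t\<in>{t. z t \<noteq> 0}. z t * F t u)"

definition fs :: "('x \<Rightarrow> complex) \<Rightarrow> bool" where
  "fs z \<longleftrightarrow> finite {t. z t \<noteq> 0}"

lemma lin_superset:
  assumes "finite X" "{t. z t \<noteq> 0} \<subseteq> X"
  shows "lin F z u = (\<Sum>t\<in>X. z t * F t u)"
  unfolding lin_def
  by (rule sum.mono_neutral_left[OF assms(1,2)]) auto

lemma fs_sum:
  assumes "finite B" "\<And>b. b \<in> B \<Longrightarrow> fs (f b)"
  shows "fs (\<lambda>t. \<Sum>b\<in>B. a b * f b t)"
proof -
  have "{t. (\<Sum>b\<in>B. a b * f b t) \<noteq> 0} \<subseteq> (\<Union>b\<in>B. {t. f b t \<noteq> 0})"
  proof
    fix t assume "t \<in> {t. (\<Sum>b\<in>B. a b * f b t) \<noteq> 0}"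
    then obtain b where "b \<in> B" "a b * f b t \<noteq> 0"
      by (metis (mono_tags, lifting) mem_Collect_eq sum.neutral)
    then show "t \<in> (\<Union>b\<in>B. {t. f b t \<noteq> 0})" by auto
  qed
  moreover have "finite (\<Union>b\<in>B. {t. f b t \<noteq> 0})"
    using assms by (auto simp: fs_def)
  ultimately show ?thesis unfolding fs_def by (meson finite_subset)
qed

lemma fs_sng: "fs (sng t)"
  unfolding fs_def sng_def by simp

lemma lin_sum:
  assumes "finite B" "\<And>b. b \<in> B \<Longrightarrow> fs (f b)"
  shows "lin F (\<lambda>t. \<Sum>b\<in>B. a b * f b t) u = (\<Sum>b\<in>B. a b * lin F (f b) u)"
proof -
  define X where "X = (\<Union>b\<in>B. {t. f b t \<noteq> 0})"
  have fX: "finite X" using assms by (auto simp: fs_def X_def)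
  have s1: "{t. (\<Sum>b\<in>B. a b * f b t) \<noteq> 0} \<subseteq> X"
  proof
    fix t assume "t \<in> {t. (\<Sum>b\<in>B. a b * f b t) \<noteq> 0}"
    then obtain b where "b \<in> B" "a b * f b t \<noteq> 0"
      by (metis (mono_tags, lifting) mem_Collect_eq sum.neutral)
    then show "t \<in> X" by (auto simp: X_def)
  qed
  have "lin F (\<lambda>t. \<Sum>b\<in>B. a b * f b t) u = (\<Sum>t\<in>X. (\<Sum>b\<in>B. a b * f b t) * F t u)"
    by (rule lin_superset[OF fX s1])
  also have "\<dots> = (\<Sum>b\<in>B. a b * (\<Sum>t\<in>X. f b t * F t u))"
    by (simp add: sum_distrib_left sum_distrib_right mult.assoc sum.swap[of _ X])
  also have "\<dots> = (\<Sum>b\<in>B. a b * lin F (f b) u)"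
    by (rule sum.cong[OF refl]) (subst lin_superset[OF fX], auto simp: X_def)
  finally show ?thesis .
qed

lemma lin_sng: "lin F (sng t) u = F t u"
  by (subst lin_superset[of "{t}"]) (auto simp: sng_def)

lemma lin_sum_sng:
  assumes "finite B"
  shows "lin F (\<lambda>x. \<Sum>b\<in>B. a b * sng (g b) x) u = (\<Sum>b\<in>B. a b * F (g b) u)"
  by (subst lin_sum[OF assms fs_sng]) (simp add: lin_sng)

lemma lin_zero: "lin F (\<lambda>_. 0) u = 0"
  unfolding lin_def by simp



lemma in_span_zero: "in_span G (\<lambda>_. 0)"
  unfolding in_span_def by (rule exI[of _ "{}"]) auto

lemma in_span_gen: "g \<in> G \<Longrightarrow> in_span G g"
  unfolding in_span_def by (rule exI[of _ "{g}"], rule exI[of _ "\<lambda>_. 1"]) auto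

lemma in_span_add:
  assumes "in_span G x" "in_span G y"
  shows "in_span G (\<lambda>u. a * x u + y u)"
proof -
  obtain S1 c1 where 1: "finite S1" "S1 \<subseteq> G" "x = (\<lambda>u. \<Sum>g\<in>S1. c1 g * g u)"
    using assms(1) unfolding in_span_def by blast
  obtain S2 c2 where 2: "finite S2" "S2 \<subseteq> G" "y = (\<lambda>u. \<Sum>g\<in>S2. c2 g * g u)"
    using assms(2) unfolding in_span_def by blast
  define c where "c g = a * (if g \<in> S1 then c1 g else 0) + (if g \<in> S2 then c2 g else 0)" for g
  have "(\<lambda>u. a * x u + y u) = (\<lambda>u. \<Sum>g\<in>S1 \<union> S2. c g * g u)"
  proof
    fix u
    have "(\<Sum>g\<in>S1 \<union> S2. c g * g u) = a * (\<Sum>g\<in>S1 \<union> S2. (if g \<in> S1 then c1 g else 0) * g u)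
        + (\<Sum>g\<in>S1 \<union> S2. (if g \<in> S2 then c2 g else 0) * g u)"
      by (simp add: c_def distrib_right sum.distrib sum_distrib_left mult.assoc)
    also have "(\<Sum>g\<in>S1 \<union> S2. (if g \<in> S1 then c1 g else 0) * g u) = (\<Sum>g\<in>S1. c1 g * g u)"
      by (rule sum.mono_neutral_cong_right) (use 1 2 in auto)
    also have "(\<Sum>g\<in>S1 \<union> S2. (if g \<in> S2 then c2 g else 0) * g u) = (\<Sum>g\<in>S2. c2 g * g u)"
      by (rule sum.mono_neutral_cong_right) (use 1 2 in auto)
    finally show "a * x u + y u = (\<Sum>g\<in>S1 \<union> S2. c g * g u)" using 1 2 by simp
  qed
  then show ?thesis unfolding in_span_def using 1 2 by blast
qed

lemma in_span_sum:
  assumes "finite B" "\<And>b. b \<in> B \<Longrightarrow> in_span G (f b)"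
  shows "in_span G (\<lambda>u. \<Sum>b\<in>B. a b * f b u)"
  using assms
proof (induction B rule: finite_induct)
  case empty then show ?case by (simp add: in_span_zero)
next
  case (insert b B)
  have "in_span G (\<lambda>u. a b * f b u + (\<Sum>b\<in>B. a b * f b u))"
    by (rule in_span_add) (use insert in auto)
  then show ?case using insert by simp
qed

lemma in_span_cong: "in_span G x \<Longrightarrow> (\<And>u. x u = y u) \<Longrightarrow> in_span G y"
  by (metis ext)



lemma potential_aux:
  fixes E :: "nat set set" and m k n :: nat and \<phi> :: "'v \<Rightarrow> nat"
  assumes bij: "bij_betw (\<lambda>a. {\<phi> (src a), \<phi> (tgt a)}) Arr E"
    and E: "E = path_edges m \<union> X"
    and X: "X = {} \<or> (X = {{k, m}} \<and> k < m)"
  shows "\<exists>c::'v \<Rightarrow> complex. \<forall>a\<in>Arr. c (tgt a) = c (src a) + 1/2"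
proof -
  define \<psi> where "\<psi> a = {\<phi> (src a), \<phi> (tgt a)}" for a
  define arr where "arr e = inv_into Arr \<psi> e" for e
  define st where "st i e = (if \<phi> (src (arr e)) = i then (1/2::complex) else -1/2)" for i e
  define f where "f = rec_nat (0::complex) (\<lambda>i r. r + st i {i, Suc i})"
  have f0: "f 0 = 0" and fS: "f (Suc i) = f i + st i {i, Suc i}" for i by (simp_all add: f_def)
  define g where "g x = (if X \<noteq> {} \<and> x = m then f k + st k {k, m} else f x)" for x
  define c where "c v = g (\<phi> v)" for v
  have arr: "arr (\<psi> a) = a" if "a \<in> Arr" for a
  proof -
    have "inj_on \<psi> Arr" using bij by (simp add: bij_betw_def \<psi>_def[abs_def])
    then show ?thesis unfolding arr_def using that by (simp add: inv_into_f_f)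
  qed
  have psiE: "\<psi> a \<in> E" if "a \<in> Arr" for a using bij that unfolding \<psi>_def bij_betw_def by auto
  have "c (tgt a) = c (src a) + 1/2" if a: "a \<in> Arr" for a
  proof -
    have ar: "arr {\<phi> (src a), \<phi> (tgt a)} = a" using arr[OF a] by (simp add: \<psi>_def)
    from psiE[OF a] E consider i where "\<psi> a = {i, Suc i}" "Suc i < m" | "X \<noteq> {}" "\<psi> a = {k, m}" "k < m"
      unfolding path_edges_def using X by auto
    then show ?thesis
    proof cases
      case (1 i)
      have gi: "g i = f i" "g (Suc i) = f (Suc i)" using 1 by (auto simp: g_def)
      from 1 have "(\<phi> (src a) = i \<and> \<phi> (tgt a) = Suc i) \<or> (\<phi> (src a) = Suc i \<and> \<phi> (tgt a) = i)"
        unfolding \<psi>_def by (auto simp: doubleton_eq_iff)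
      then show ?thesis
      proof
        assume h: "\<phi> (src a) = i \<and> \<phi> (tgt a) = Suc i"
        then show ?thesis using ar by (simp add: c_def gi fS st_def)
      next
        assume h: "\<phi> (src a) = Suc i \<and> \<phi> (tgt a) = i"
        have "arr {i, Suc i} = a" using ar h by (simp add: insert_commute)
        then show ?thesis using h by (simp add: c_def gi fS st_def)
      qed
    next
      case 2
      have gi: "g k = f k" "g m = f k + st k {k, m}" using 2 by (auto simp: g_def)
      from 2 have "(\<phi> (src a) = k \<and> \<phi> (tgt a) = m) \<or> (\<phi> (src a) = m \<and> \<phi> (tgt a) = k)"
        unfolding \<psi>_def by (auto simp: doubleton_eq_iff)
      then show ?thesis
      proof
        assume h: "\<phi> (src a) = k \<and> \<phi> (tgt a) = m"
        then show ?thesis using ar by (simp add: c_def gi st_def)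
      next
        assume h: "\<phi> (src a) = m \<and> \<phi> (tgt a) = k"
        have "arr {k, m} = a" using ar h by (simp add: insert_commute)
        then show ?thesis using h 2 by (simp add: c_def gi st_def)
      qed
    qed
  qed
  then show ?thesis by blast
qed

lemma potential:
  assumes "dynkin_quiver I Arr src tgt"
  shows "\<exists>c::'v \<Rightarrow> complex. \<forall>a\<in>Arr. c (tgt a) = c (src a) + 1/2"
proof -
  obtain T n \<phi> where ok: "dynkin_ok T n" and bij: "bij_betw (\<lambda>a. {\<phi> (src a), \<phi> (tgt a)}) Arr (dynkin_edges T n)"
    using assms unfolding dynkin_quiver_def by blast
  show ?thesis
  proof (cases T)
    case TypeA
    show ?thesis by (rule potential_aux[where \<phi>=\<phi> and src=src and tgt=tgt and Arr=Arr, OF bij, of n "{}"]) (simp_all add: TypeA dynkin_edges_def)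
  next
    case TypeD
    show ?thesis by (rule potential_aux[where \<phi>=\<phi> and src=src and tgt=tgt and Arr=Arr, OF bij, of "n - 1" "{{n - 3, n - 1}}" "n - 3"])
      (use ok in \<open>simp_all add: TypeD dynkin_edges_def dynkin_ok_def\<close>)
  next
    case TypeE
    show ?thesis by (rule potential_aux[where \<phi>=\<phi> and src=src and tgt=tgt and Arr=Arr, OF bij, of "n - 1" "{{2, n - 1}}" "2"])
      (use ok in \<open>auto simp add: TypeE dynkin_edges_def dynkin_ok_def\<close>)
  qed
qed

lemma finite_I:
  assumes "dynkin_quiver I Arr src tgt" shows "finite I"
  using assms unfolding dynkin_quiver_def by (metis bij_betw_finite finite_lessThan)



lemma endv_cons: "endv src tgt (v, x # xs) = endv src tgt (dtgt src tgt x, xs)"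
  by (simp add: endv_def)

lemma walk_pot:
  assumes pot: "\<forall>a\<in>Arr. c (tgt a) = c (src a) + (1/2::complex)"
  shows "(\<forall>x\<in>set xs. fst x \<in> Arr) \<Longrightarrow> walk src tgt v xs \<Longrightarrow>
     c v - c (endv src tgt (v, xs)) = of_nat (length (filter snd xs)) - of_nat (length xs) / 2"
proof (induction xs arbitrary: v)
  case Nil then show ?case by (simp add: endv_def)
next
  case (Cons x xs)
  have IH: "c (dtgt src tgt x) - c (endv src tgt (dtgt src tgt x, xs)) =
     of_nat (length (filter snd xs)) - of_nat (length xs) / 2"
    using Cons by simp
  have v: "v = dsrc src tgt x" using Cons by simp
  have a: "fst x \<in> Arr" using Cons by simp
  have st: "c (dsrc src tgt x) - c (dtgt src tgt x) = (if snd x then 1/2 else -1/2)"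
    using pot a by (auto simp: dsrc_def dtgt_def)
  have "c v - c (endv src tgt (v, x # xs)) = (c (dsrc src tgt x) - c (dtgt src tgt x)) +
     (c (dtgt src tgt x) - c (endv src tgt (dtgt src tgt x, xs)))"
    using v by (simp add: endv_cons)
  also have "\<dots> = of_nat (length (filter snd (x # xs))) - of_nat (length (x # xs)) / 2"
    unfolding st IH by (cases "snd x") (simp_all add: field_simps)
  finally show ?case .
qed

lemma walk_end_in:
  assumes "\<forall>a\<in>Arr. src a \<in> I \<and> tgt a \<in> I"
  shows "(\<forall>x\<in>set xs. fst x \<in> Arr) \<Longrightarrow> walk src tgt v xs \<Longrightarrow> v \<in> I \<Longrightarrow> endv src tgt (v, xs) \<in> I"
proof (induction xs arbitrary: v)
  case Nil then show ?case by (simp add: endv_def)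
next
  case (Cons x xs)
  have "dtgt src tgt x \<in> I" using Cons assms by (auto simp: dtgt_def)
  then show ?case using Cons by (simp add: endv_cons)
qed

lemma valid_end_in:
  assumes "\<forall>a\<in>Arr. src a \<in> I \<and> tgt a \<in> I" "valid_path I Arr src tgt p"
  shows "endv src tgt p \<in> I" "fst p \<in> I"
  using walk_end_in[OF assms(1), of "snd p" "fst p"] assms(2) by (auto simp: valid_path_def)

definition delta :: "('a \<Rightarrow> 'v) \<Rightarrow> ('a \<Rightarrow> 'v) \<Rightarrow> ('v \<Rightarrow> complex) \<Rightarrow> ('v, 'a) path list \<Rightarrow> complex" where
  "delta src tgt c t = (\<Sum>j<length t. c (fst (t ! j)) - c (endv src tgt (t ! j)))"

lemma delta_eq:
  assumes pot: "\<forall>a\<in>Arr. c (tgt a) = c (src a) + (1/2::complex)"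
    and val: "\<forall>p\<in>set t. valid_path I Arr src tgt p"
  shows "of_nat (star_count t) - of_nat (tdeg t) / 2 = delta src tgt c t"
proof -
  have "of_nat (star_count t) - of_nat (tdeg t) / 2 =
        (\<Sum>p\<leftarrow>t. c (fst p) - c (endv src tgt p))"
    using val
  proof (induction t)
    case Nil then show ?case by (simp add: star_count_def tdeg_def)
  next
    case (Cons p t)
    have "c (fst p) - c (endv src tgt p) = of_nat (length (filter snd (snd p))) - of_nat (length (snd p)) / 2"
      using walk_pot[where c=c and Arr=Arr and src=src and tgt=tgt, OF pot, of "snd p" "fst p"] Cons.prems by (simp add: valid_path_def)
    then show ?case using Cons by (simp add: star_count_def tdeg_def algebra_simps add_divide_distrib)
  qed
  also have "\<dots> = delta src tgt c t"
    unfolding delta_def by (simp add: sum_list_sum_nth atLeast0LessThan)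
  finally show ?thesis .
qed



definition ins :: "('v, 'a) path list \<Rightarrow> nat \<Rightarrow> 'v \<Rightarrow> ('v, 'a) path list" where
  "ins t k v = take k t @ (v, []) # drop k t"

definition cat :: "('v, 'a) path \<Rightarrow> ('v, 'a) path \<Rightarrow> ('v, 'a) path" where
  "cat p q = (fst p, snd p @ snd q)"

definition bet :: "('a \<Rightarrow> 'v) \<Rightarrow> ('a \<Rightarrow> 'v) \<Rightarrow> ('v, 'a) path list \<Rightarrow> nat \<Rightarrow> complex" where
  "bet src tgt s j = (if j < length s - 1 then (if endv src tgt (s ! j) = fst (s ! Suc j) then (-1) ^ j else 0)
     else if 2 \<le> length s \<and> endv src tgt (last s) = fst (hd s) then (-1) ^ (length s - 1) else 0)"

definition rho :: "('v, 'a) path list \<Rightarrow> nat \<Rightarrow> ('v, 'a) path list" where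
  "rho s j = (if j < length s - 1 then take j s @ cat (s ! j) (s ! Suc j) # drop (Suc (Suc j)) s
     else cat (last s) (hd s) # butlast (tl s))"

lemma bterm_eq:
  assumes "t \<noteq> []"
  shows "bterm src tgt t u = (\<Sum>j<length t. bet src tgt t j * sng (rho t j) u)"
proof -
  have e: "{..<length t} = insert (length t - 1) {..<length t - 1}" using assms by auto
  have 1: "(\<Sum>j<length t - 1. (case pcat src tgt (t ! j) (t ! Suc j) of None \<Rightarrow> 0
          | Some r \<Rightarrow> if u = take j t @ r # drop (Suc (Suc j)) t then (-1) ^ j else 0))
       = (\<Sum>j<length t - 1. bet src tgt t j * sng (rho t j) u)"
    by (rule sum.cong) (auto simp: pcat_def bet_def rho_def sng_def cat_def)
  have 2: "(if 2 \<le> length t then (case pcat src tgt (last t) (hd t) of None \<Rightarrow> 0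
          | Some r \<Rightarrow> if u = r # butlast (tl t) then (-1) ^ (length t - 1) else 0) else 0)
       = bet src tgt t (length t - 1) * sng (rho t (length t - 1)) u"
    by (auto simp: pcat_def bet_def rho_def sng_def cat_def)
  show ?thesis unfolding bterm_def 1 2 e by (simp add: add.commute)
qed

lemma length_ins[simp]: "k \<le> length t \<Longrightarrow> length (ins t k v) = Suc (length t)"
  by (simp add: ins_def)

lemma nth_ins: "k \<le> length t \<Longrightarrow> ins t k v ! i = (if i < k then t ! i else if i = k then (v, []) else t ! (i - 1))"
  by (auto simp: ins_def nth_append min_def Suc_diff_Suc)

lemma length_rho: "2 \<le> length t \<Longrightarrow> length (rho t j) = length t - 1"
  by (auto simp: rho_def)

lemma nth_rho_merge: "j < length t - 1 \<Longrightarrow>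
   rho t j ! i = (if i < j then t ! i else if i = j then cat (t ! j) (t ! Suc j) else t ! Suc i)"
  by (auto simp: rho_def nth_append min_def)

lemma nth_rho_wrap: "2 \<le> length t \<Longrightarrow> \<not> j < length t - 1 \<Longrightarrow> i < length t - 1 \<Longrightarrow>
   rho t j ! i = (if i = 0 then cat (last t) (hd t) else t ! i)"
  by (cases i) (auto simp: rho_def nth_butlast nth_tl)



lemma L1:
  assumes "Suc j < k" "k \<le> length t"
  shows "bet src tgt (ins t k v) j = bet src tgt t j" "rho (ins t k v) j = ins (rho t j) (k - 1) v"
proof -
  have m: "j < length t - 1" using assms by auto
  have n1: "ins t k v ! j = t ! j" "ins t k v ! Suc j = t ! Suc j" using assms by (auto simp: nth_ins)
  show "bet src tgt (ins t k v) j = bet src tgt t j"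
    using assms m by (simp add: bet_def n1)
  have lr: "length (rho t j) = length t - 1" using assms by (intro length_rho) auto
  show "rho (ins t k v) j = ins (rho t j) (k - 1) v"
  proof (rule nth_equalityI)
    show "length (rho (ins t k v) j) = length (ins (rho t j) (k - 1) v)"
      using assms lr by (simp add: length_rho)
  next
    fix i assume "i < length (rho (ins t k v) j)"
    then have i: "i < length t" using assms by (simp add: length_rho)
    have jm: "j < length (ins t k v) - 1" using assms by simp
    show "rho (ins t k v) j ! i = ins (rho t j) (k - 1) v ! i"
      using assms i m lr
      by (auto simp: nth_rho_merge[OF jm] nth_rho_merge[OF m] nth_ins)
  qed
qed

lemma L2:
  assumes "k < j" "j \<le> length t" "1 \<le> k"
  shows "bet src tgt (ins t k v) j = - bet src tgt t (j - 1)" "rho (ins t k v) j = ins (rho t (j - 1)) k v"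
proof -
  have k: "k \<le> length t" using assms by simp
  have m2: "2 \<le> length t" using assms by simp
  have lr: "length (rho t (j - 1)) = length t - 1" using m2 by (rule length_rho)
  show "bet src tgt (ins t k v) j = - bet src tgt t (j - 1)"
  proof (cases "j < length t")
    case True
    have n1: "ins t k v ! j = t ! (j - 1)" "ins t k v ! Suc j = t ! j" using assms True by (auto simp: nth_ins)
    have pw: "(-1::complex)^j = - ((-1)^(j-1))" using assms by (cases j) auto
    have "j - 1 < length t - 1" using assms True by auto
    then show ?thesis using assms True k
      by (simp add: bet_def n1 pw)
  next
    case False
    then have jj: "j = length t" using assms by simp
    have "last (ins t k v) = last t" using assms jj by (auto simp: ins_def)
    moreover have "hd (ins t k v) = hd t" using assms jj
      by (cases t) (auto simp: ins_def)
    ultimately show ?thesis using assms jj m2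
      by (cases "length t") (auto simp: bet_def)
  qed
  show "rho (ins t k v) j = ins (rho t (j - 1)) k v"
  proof (rule nth_equalityI)
    show "length (rho (ins t k v) j) = length (ins (rho t (j - 1)) k v)"
      using assms lr m2 by (simp add: length_rho)
    fix i assume "i < length (rho (ins t k v) j)"
    then have i: "i < length t" using assms m2 by (simp add: length_rho)
    show "rho (ins t k v) j ! i = ins (rho t (j - 1)) k v ! i"
    proof (cases "j < length t")
      case True
      have jm: "j < length (ins t k v) - 1" using assms True by simp
      obtain j' where j': "j = Suc j'" using assms by (cases j) auto
      have jm': "j' < length t - 1" using assms True j' by simp
      show ?thesis using assms i True lr unfolding j'
        by (auto simp: nth_rho_merge[OF jm[unfolded j']] nth_rho_merge[OF jm'] nth_ins)
    next
      case False
      then have jj: "j = length t" using assms by simp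
      have w1: "\<not> j < length (ins t k v) - 1" using jj assms by simp
      have w2: "\<not> j - 1 < length t - 1" using jj assms by simp
      have l2: "2 \<le> length (ins t k v)" using assms by simp
      have lt: "last (ins t k v) = last t" using assms jj by (auto simp: ins_def)
      have ht: "hd (ins t k v) = hd t" using assms jj by (cases t) (auto simp: ins_def)
      have il: "i < length (ins t k v) - 1" using i k by simp
      have a: "rho (ins t k v) j ! i = (if i = 0 then cat (last t) (hd t) else ins t k v ! i)"
        using nth_rho_wrap[OF l2 w1 il] lt ht by simp
      have b: "rho t (length t - Suc 0) ! x = (if x = 0 then cat (last t) (hd t) else t ! x)" if "x < length t - Suc 0" for x
        using nth_rho_wrap[OF m2, of "length t - Suc 0" x] that by simp
      have kk: "k \<le> length (rho t (j - 1))" using lr assms jj by simp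
      show ?thesis unfolding a nth_ins[OF kk] nth_ins[OF k] using assms i lr jj
        by (auto simp: b)
    qed
  qed
qed



lemma endv_triv[simp]: "endv src tgt (v, []) = v" by (simp add: endv_def)

lemma Diag1:
  assumes "1 \<le> k" "k \<le> length t"
  shows "bet src tgt (ins t k v) (k - 1) * sng (rho (ins t k v) (k - 1)) u =
    (if endv src tgt (t ! (k - 1)) = v then (-1) ^ (k - 1) * sng t u else 0)"
proof -
  obtain k' where k: "k = Suc k'" using assms by (cases k) auto
  have kl: "k \<le> length t" using assms by simp
  have m: "k' < length (ins t k v) - 1" using assms k by simp
  have n1: "ins t k v ! k' = t ! k'" "ins t k v ! Suc k' = (v, [])" using assms k by (auto simp: nth_ins)
  have r: "rho (ins t k v) k' = t"
  proof (rule nth_equalityI)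
    show "length (rho (ins t k v) k') = length t" using assms by (simp add: length_rho)
    fix i assume "i < length (rho (ins t k v) k')"
    then have i: "i < length t" using assms by (simp add: length_rho)
    show "rho (ins t k v) k' ! i = t ! i"
      unfolding nth_rho_merge[OF m] using i k assms by (auto simp: nth_ins cat_def)
  qed
  show ?thesis using m n1 r k by (simp add: bet_def)
qed

lemma Diag2:
  assumes "1 \<le> k" "k \<le> length t"
  shows "bet src tgt (ins t k v) k * sng (rho (ins t k v) k) u =
    (if v = fst (t ! (k mod length t)) then (-1) ^ k * sng t u else 0)"
proof (cases "k < length t")
  case True
  have m: "k < length (ins t k v) - 1" using assms True by simp
  have n1: "ins t k v ! k = (v, [])" "ins t k v ! Suc k = t ! k" using assms True by (auto simp: nth_ins)
  have r: "rho (ins t k v) k = t" if v: "v = fst (t ! k)"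
  proof (rule nth_equalityI)
    show "length (rho (ins t k v) k) = length t" using assms by (simp add: length_rho)
    fix i assume "i < length (rho (ins t k v) k)"
    then have i: "i < length t" using assms by (simp add: length_rho)
    show "rho (ins t k v) k ! i = t ! i"
      unfolding nth_rho_merge[OF m] using i assms True v by (auto simp: nth_ins cat_def)
  qed
  show ?thesis using m n1 r True by (auto simp: bet_def)
next
  case False
  then have kk: "k = length t" using assms by simp
  have w: "\<not> k < length (ins t k v) - 1" using kk by simp
  have l2: "2 \<le> length (ins t k v)" using assms by simp
  have lt: "last (ins t k v) = (v, [])" using kk by (simp add: ins_def)
  have ht: "hd (ins t k v) = t ! 0" using assms kk by (cases t) (auto simp: ins_def)
  have r: "rho (ins t k v) k = t" if v: "v = fst (t ! 0)"
  proof (rule nth_equalityI)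
    show "length (rho (ins t k v) k) = length t" using assms by (simp add: length_rho)
    fix i assume "i < length (rho (ins t k v) k)"
    then have i: "i < length t" using assms by (simp add: length_rho)
    have il: "i < length (ins t k v) - 1" using i assms by simp
    show "rho (ins t k v) k ! i = t ! i"
      unfolding nth_rho_wrap[OF l2 w il] lt ht using i assms kk v by (auto simp: nth_ins cat_def)
  qed
  show ?thesis using w l2 lt ht r kk assms by (auto simp: bet_def)
qed



definition Hop :: "'v set \<Rightarrow> ('v \<Rightarrow> complex) \<Rightarrow> ('v, 'a) path list \<Rightarrow> ('v, 'a) path list \<Rightarrow> complex" where
  "Hop I c t u = (\<Sum>k\<in>{1..length t}. \<Sum>v\<in>I. ((-1) ^ k * c v) * sng (ins t k v) u)"

lemma lin_sum2:
  assumes "finite A" "finite B"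
  shows "lin F (\<lambda>x. \<Sum>a\<in>A. \<Sum>b\<in>B. g a b * sng (h a b) x) u = (\<Sum>a\<in>A. \<Sum>b\<in>B. g a b * F (h a b) u)"
proof -
  have "lin F (\<lambda>x. \<Sum>a\<in>A. \<Sum>b\<in>B. g a b * sng (h a b) x) u
      = lin F (\<lambda>x. \<Sum>a\<in>A. 1 * (\<lambda>x. \<Sum>b\<in>B. g a b * sng (h a b) x) x) u" by simp
  also have "\<dots> = (\<Sum>a\<in>A. 1 * lin F (\<lambda>x. \<Sum>b\<in>B. g a b * sng (h a b) x) u)"
    by (rule lin_sum[OF assms(1)]) (rule fs_sum[OF assms(2) fs_sng])
  also have "\<dots> = (\<Sum>a\<in>A. \<Sum>b\<in>B. g a b * F (h a b) u)"
    by (simp add: lin_sum_sng[OF assms(2)])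
  finally show ?thesis .
qed

lemma split4:
  assumes "1 \<le> k" "k \<le> m"
  shows "(\<Sum>j<Suc m. f j) = (\<Sum>j<k - 1. f j) + f (k - 1) + f k + (\<Sum>j\<in>{Suc k..m}. f j)"
proof -
  obtain k' where k: "k = Suc k'" using assms by (cases k) auto
  have e: "{..<Suc m} = {..<k'} \<union> ({k'} \<union> ({Suc k'} \<union> {Suc (Suc k')..m}))" using assms k by auto
  have d: "(\<Sum>j\<in>{..<k'} \<union> {Suc (Suc k')..m}. f j) = (\<Sum>j<k'. f j) + (\<Sum>j\<in>{Suc (Suc k')..m}. f j)"
    by (rule sum.union_disjoint) auto
  show ?thesis unfolding e k by (simp add: d algebra_simps)
qed

lemma bet_nz: "bet src tgt t j \<noteq> 0 \<Longrightarrow> 2 \<le> length t"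
  by (auto simp: bet_def split: if_splits)

lemma ins_nonempty: "ins t k v \<noteq> []" by (simp add: ins_def)



lemma R1: fixes m :: nat shows "(\<Sum>k\<in>{1..m}. f (k - 1)) = (\<Sum>k<m. f k)"
proof -
  have "{1..m} = Suc ` {..<m}" by (simp add: image_Suc_lessThan)
  then show ?thesis by (simp add: sum.reindex)
qed

lemma R2: fixes a b :: nat shows "(\<Sum>k\<in>{Suc a..b}. f (k - 1)) = (\<Sum>k\<in>{a..<b}. f k)"
proof -
  have e: "{Suc a..b} = Suc ` {a..<b}" by (simp add: atLeastLessThanSuc_atLeastAtMost)
  have "(\<Sum>k\<in>Suc ` {a..<b}. f (k - 1)) = (\<Sum>k\<in>{a..<b}. f (Suc k - 1))"
    by (rule sum.reindex[unfolded comp_def]) simp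
  then show ?thesis unfolding e by simp
qed

lemma R3: fixes m :: nat assumes "1 \<le> m" shows "(\<Sum>k\<in>{1..m}. f (k mod m)) = (\<Sum>k<m. f k)"
proof -
  have e1: "{1..m} = insert m {1..<m}" using assms by (auto simp: le_less)
  have e2: "{..<m} = insert 0 {1..<m}" using assms by auto
  have "(\<Sum>k\<in>{1..<m}. f (k mod m)) = (\<Sum>k\<in>{1..<m}. f k)" by (rule sum.cong) auto
  then show ?thesis unfolding e1 e2 by simp
qed

lemma R4: fixes m :: nat assumes "f 0 = 0" shows "(\<Sum>k<m. f k) = (\<Sum>k\<in>{1..<m}. f k)"
proof (cases m)
  case 0 then show ?thesis by simp
next
  case (Suc m')
  have e2: "{..<m} = insert 0 {1..<m}" using Suc by auto
  show ?thesis unfolding e2 using assms by simp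
qed

lemma R5: fixes m :: nat assumes "f m = 0" "1 \<le> m" shows "(\<Sum>k\<in>{1..m}. f k) = (\<Sum>k\<in>{1..<m}. f k)"
proof -
  have e1: "{1..m} = insert m {1..<m}" using assms by (auto simp: le_less)
  show ?thesis unfolding e1 using assms by simp
qed



lemma Key:
  fixes t :: "('v, 'a) path list" and c :: "'v \<Rightarrow> complex"
  assumes fI: "finite I" and ne: "t \<noteq> []"
    and inI: "\<forall>j<length t. endv src tgt (t ! j) \<in> I \<and> fst (t ! j) \<in> I"
  shows "lin (bterm src tgt) (Hop I c t) u + lin (Hop I c) (bterm src tgt t) u = delta src tgt c t * sng t u"
proof -
  define m where "m = length t"
  have m1: "1 \<le> m" using ne by (simp add: m_def Suc_le_eq)
  define S where "S j k v = sng (ins (rho t j) k v) u" for j k v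
  define cf where "cf k v = ((-1::complex) ^ k * c v)" for k v
  define G where "G k j = (\<Sum>v\<in>I. cf k v * (bet src tgt t j * S j k v))" for k j
  define D1 where "D1 k v = bet src tgt (ins t k v) (k - 1) * sng (rho (ins t k v) (k - 1)) u" for k v
  define D2 where "D2 k v = bet src tgt (ins t k v) k * sng (rho (ins t k v) k) u" for k v
  have Hf: "Hop I c t = (\<lambda>x. \<Sum>k\<in>{1..m}. \<Sum>v\<in>I. cf k v * sng (ins t k v) x)"
    by (rule ext) (simp add: Hop_def m_def cf_def)
  have BH: "lin (bterm src tgt) (Hop I c t) u = (\<Sum>k\<in>{1..m}. \<Sum>v\<in>I. cf k v * bterm src tgt (ins t k v) u)"
    unfolding Hf by (rule lin_sum2) (simp_all add: fI)
  have bf: "bterm src tgt t = (\<lambda>x. \<Sum>j<m. bet src tgt t j * sng (rho t j) x)"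
    by (rule ext) (simp add: bterm_eq[OF ne] m_def)
  have HB: "lin (Hop I c) (bterm src tgt t) u = (\<Sum>j<m. bet src tgt t j * Hop I c (rho t j) u)"
    unfolding bf by (rule lin_sum_sng) simp
  have ins_exp: "bterm src tgt (ins t k v) u = (\<Sum>j<k - 1. bet src tgt t j * S j (k - 1) v) + (D1 k v + D2 k v)
      - (\<Sum>j\<in>{k..<m}. bet src tgt t j * S j k v)" if k: "k \<in> {1..m}" for k v
  proof -
    have k1: "1 \<le> k" "k \<le> m" using k by auto
    have "bterm src tgt (ins t k v) u = (\<Sum>j<Suc m. bet src tgt (ins t k v) j * sng (rho (ins t k v) j) u)"
      using bterm_eq[OF ins_nonempty, of src tgt t k v u] k1 by (simp add: m_def)
    also have "\<dots> = (\<Sum>j<k - 1. bet src tgt (ins t k v) j * sng (rho (ins t k v) j) u) + D1 k v + D2 k v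
        + (\<Sum>j\<in>{Suc k..m}. bet src tgt (ins t k v) j * sng (rho (ins t k v) j) u)"
      unfolding D1_def D2_def by (rule split4[OF k1])
    also have "(\<Sum>j<k - 1. bet src tgt (ins t k v) j * sng (rho (ins t k v) j) u) = (\<Sum>j<k - 1. bet src tgt t j * S j (k - 1) v)"
      by (rule sum.cong[OF refl]) (use k1 in \<open>simp add: L1 S_def m_def\<close>)
    also have "(\<Sum>j\<in>{Suc k..m}. bet src tgt (ins t k v) j * sng (rho (ins t k v) j) u)
        = (\<Sum>j\<in>{Suc k..m}. - (bet src tgt t (j - 1) * S (j - 1) k v))"
      by (rule sum.cong[OF refl]) (use k1 in \<open>simp add: L2 S_def m_def\<close>)
    also have "\<dots> = - (\<Sum>j\<in>{Suc k..m}. bet src tgt t (j - 1) * S (j - 1) k v)"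
      by (simp only: sum_negf)
    also have "\<dots> = - (\<Sum>j\<in>{k..<m}. bet src tgt t j * S j k v)"
      by (rule arg_cong[where f=uminus], rule R2)
    finally show ?thesis by simp
  qed
  have D1v: "(\<Sum>v\<in>I. cf k v * D1 k v) = - c (endv src tgt (t ! (k - 1))) * sng t u" if k: "k \<in> {1..m}" for k
  proof -
    have "(\<Sum>v\<in>I. cf k v * D1 k v) = (\<Sum>v\<in>I. if endv src tgt (t ! (k - 1)) = v then cf k v * ((-1) ^ (k - 1) * sng t u) else 0)"
    proof (rule sum.cong[OF refl])
      have a: "1 \<le> k" "k \<le> length t" using k by (auto simp: m_def)
      fix v show "cf k v * D1 k v = (if endv src tgt (t ! (k - 1)) = v then cf k v * ((-1) ^ (k - 1) * sng t u) else 0)"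
        by (simp only: D1_def Diag1[OF a]) simp
    qed
    also have "\<dots> = cf k (endv src tgt (t ! (k - 1))) * ((-1) ^ (k - 1) * sng t u)"
    proof -
      have "k - 1 < length t" using k by (auto simp: m_def)
      then have "endv src tgt (t ! (k - 1)) \<in> I" using inI by blast
      then show ?thesis using fI by (simp add: sum.delta)
    qed
    also have "\<dots> = - c (endv src tgt (t ! (k - 1))) * sng t u"
    proof -
      have "(-1::complex) ^ k * (-1) ^ (k - 1) = -1" using k
        by (cases k) (auto simp: power_Suc[symmetric] power_add[symmetric] simp del: power_Suc)
      moreover have "cf k (endv src tgt (t ! (k - 1))) * ((-1) ^ (k - 1) * sng t u) =
          ((-1::complex) ^ k * (-1) ^ (k - 1)) * (c (endv src tgt (t ! (k - 1))) * sng t u)"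
        by (simp only: cf_def mult_ac)
      ultimately show ?thesis by simp
    qed
    finally show ?thesis .
  qed
  have D2v: "(\<Sum>v\<in>I. cf k v * D2 k v) = c (fst (t ! (k mod m))) * sng t u" if k: "k \<in> {1..m}" for k
  proof -
    have "(\<Sum>v\<in>I. cf k v * D2 k v) = (\<Sum>v\<in>I. if v = fst (t ! (k mod m)) then cf k v * ((-1) ^ k * sng t u) else 0)"
    proof (rule sum.cong[OF refl])
      have a: "1 \<le> k" "k \<le> length t" using k by (auto simp: m_def)
      fix v show "cf k v * D2 k v = (if v = fst (t ! (k mod m)) then cf k v * ((-1) ^ k * sng t u) else 0)"
        by (simp only: D2_def Diag2[OF a] m_def) simp
    qed
    also have "\<dots> = cf k (fst (t ! (k mod m))) * ((-1) ^ k * sng t u)"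
    proof -
      have "k mod m < length t" using m1 by (simp add: m_def ne)
      then have "fst (t ! (k mod m)) \<in> I" using inI by blast
      then show ?thesis using fI by (simp add: sum.delta')
    qed
    also have "\<dots> = c (fst (t ! (k mod m))) * sng t u"
      by (simp add: cf_def algebra_simps power_mult_distrib[symmetric])
    finally show ?thesis .
  qed
  define T1 where "T1 = (\<Sum>k\<in>{1..m}. \<Sum>v\<in>I. cf k v * (\<Sum>j<k - 1. bet src tgt t j * S j (k - 1) v))"
  define TD where "TD = (\<Sum>k\<in>{1..m}. \<Sum>v\<in>I. cf k v * (D1 k v + D2 k v))"
  define T3 where "T3 = (\<Sum>k\<in>{1..m}. \<Sum>v\<in>I. cf k v * (\<Sum>j\<in>{k..<m}. bet src tgt t j * S j k v))"
  have BH2: "lin (bterm src tgt) (Hop I c t) u = T1 + TD - T3"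
    unfolding BH T1_def TD_def T3_def
    by (simp add: ins_exp distrib_left right_diff_distrib sum.distrib sum_subtractf)
  have T1': "T1 = - (\<Sum>k\<in>{1..<m}. \<Sum>j<k. G k j)"
  proof -
    have "T1 = (\<Sum>k\<in>{1..m}. - (\<Sum>j<k - 1. G (k - 1) j))"
      unfolding T1_def
    proof (rule sum.cong[OF refl])
      fix k assume k: "k \<in> {1..m}"
      have cfk: "cf k v = - cf (k - 1) v" for v using k
        by (cases k) (auto simp: cf_def)
      show "(\<Sum>v\<in>I. cf k v * (\<Sum>j<k - 1. bet src tgt t j * S j (k - 1) v)) = - (\<Sum>j<k - 1. G (k - 1) j)"
        unfolding G_def cfk by (simp add: sum_distrib_left sum_negf sum.swap[of _ I])
    qed
    also have "\<dots> = - (\<Sum>k<m. \<Sum>j<k. G k j)"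
      by (simp only: sum_negf) (rule arg_cong[where f=uminus], rule R1)
    also have "\<dots> = - (\<Sum>k\<in>{1..<m}. \<Sum>j<k. G k j)"
      by (subst R4) simp_all
    finally show ?thesis .
  qed
  have T3': "T3 = (\<Sum>k\<in>{1..<m}. \<Sum>j\<in>{k..<m}. G k j)"
  proof -
    have "T3 = (\<Sum>k\<in>{1..m}. \<Sum>j\<in>{k..<m}. G k j)"
      unfolding T3_def G_def by (simp add: sum_distrib_left sum.swap[of _ I])
    also have "\<dots> = (\<Sum>k\<in>{1..<m}. \<Sum>j\<in>{k..<m}. G k j)"
      by (rule R5) (use m1 in simp_all)
    finally show ?thesis .
  qed
  have HB': "lin (Hop I c) (bterm src tgt t) u = (\<Sum>k\<in>{1..<m}. (\<Sum>j<k. G k j) + (\<Sum>j\<in>{k..<m}. G k j))"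
  proof -
    have "lin (Hop I c) (bterm src tgt t) u = (\<Sum>j<m. \<Sum>k\<in>{1..<m}. G k j)"
      unfolding HB
    proof (rule sum.cong[OF refl])
      fix j assume j: "j \<in> {..<m}"
      show "bet src tgt t j * Hop I c (rho t j) u = (\<Sum>k\<in>{1..<m}. G k j)"
      proof (cases "bet src tgt t j = 0")
        case True then show ?thesis by (simp add: G_def)
      next
        case False
        then have "2 \<le> length t" by (rule bet_nz)
        then have lr: "length (rho t j) = m - 1" by (simp add: length_rho m_def)
        have e: "{1..m - 1} = {1..<m}" using m1 by auto
        show ?thesis unfolding Hop_def lr e G_def S_def cf_def
          by (simp add: sum_distrib_left algebra_simps)
      qed
    qed
    also have "\<dots> = (\<Sum>k\<in>{1..<m}. \<Sum>j<m. G k j)" by (rule sum.swap)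
    also have "\<dots> = (\<Sum>k\<in>{1..<m}. (\<Sum>j<k. G k j) + (\<Sum>j\<in>{k..<m}. G k j))"
    proof (rule sum.cong[OF refl])
      fix k assume "k \<in> {1..<m}"
      then have "{..<m} = {..<k} \<union> {k..<m}" by auto
      moreover have "(\<Sum>j\<in>{..<k} \<union> {k..<m}. G k j) = (\<Sum>j<k. G k j) + (\<Sum>j\<in>{k..<m}. G k j)"
        by (rule sum.union_disjoint) auto
      ultimately show "(\<Sum>j<m. G k j) = (\<Sum>j<k. G k j) + (\<Sum>j\<in>{k..<m}. G k j)"
        by simp
    qed
    finally show ?thesis .
  qed
  have TD': "TD = delta src tgt c t * sng t u"
  proof -
    have "TD = (\<Sum>k\<in>{1..m}. c (fst (t ! (k mod m))) * sng t u - c (endv src tgt (t ! (k - 1))) * sng t u)"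
      unfolding TD_def
      by (rule sum.cong[OF refl]) (simp add: distrib_left sum.distrib D1v D2v)
    also have "\<dots> = (\<Sum>k<m. c (fst (t ! k)) * sng t u) - (\<Sum>k<m. c (endv src tgt (t ! k)) * sng t u)"
      unfolding sum_subtractf
      by (rule arg_cong2[where f=minus], rule R3[OF m1], rule R1)
    also have "\<dots> = delta src tgt c t * sng t u"
      by (simp add: delta_def m_def sum_distrib_right sum_subtractf left_diff_distrib)
    finally show ?thesis .
  qed
  show ?thesis unfolding BH2 HB' T1' T3' TD'
    by (simp add: sum.distrib sum_negf)
qed



lemma lin_diff:
  assumes "fs f" "fs g"
  shows "lin F (\<lambda>x. f x - g x) u = lin F f u - lin F g u"
proof -
  define X where "X = {t. f t \<noteq> 0} \<union> {t. g t \<noteq> 0}"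
  have fX: "finite X" using assms by (simp add: X_def fs_def)
  have "lin F (\<lambda>x. f x - g x) u = (\<Sum>t\<in>X. (f t - g t) * F t u)"
    by (rule lin_superset[OF fX]) (auto simp: X_def)
  also have "\<dots> = (\<Sum>t\<in>X. f t * F t u) - (\<Sum>t\<in>X. g t * F t u)"
    by (simp add: left_diff_distrib sum_subtractf)
  also have "\<dots> = lin F f u - lin F g u"
    by (subst (1 2) lin_superset[OF fX]) (auto simp: X_def)
  finally show ?thesis .
qed

lemma fs_case: "fs (\<lambda>x. case X of None \<Rightarrow> 0 | Some r \<Rightarrow> if x = h r then 1 else 0)"
  by (cases X) (auto simp: fs_def)

lemma lin_case: "lin F (\<lambda>x. case X of None \<Rightarrow> 0 | Some r \<Rightarrow> if x = h r then (1::complex) else 0) u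
   = (case X of None \<Rightarrow> 0 | Some r \<Rightarrow> F (h r) u)"
proof (cases X)
  case None then show ?thesis by (simp add: lin_zero)
next
  case (Some r)
  have "(\<lambda>x. if x = h r then (1::complex) else 0) = sng (h r)" by (rule ext) (simp add: sng_def)
  then show ?thesis using Some by (simp add: lin_sng)
qed

lemma fs_rel_gen: "fs (rel_gen Arr src tgt t j p q)"
proof (cases "finite Arr")
  case True
  have "rel_gen Arr src tgt t j p q = (\<lambda>x. \<Sum>a\<in>Arr. 1 * (\<lambda>x.
      (case pcat3 src tgt p (src a, [(a, False), (a, True)]) q of None \<Rightarrow> 0
         | Some r \<Rightarrow> if x = t[j := r] then 1 else 0)
    - (case pcat3 src tgt p (tgt a, [(a, True), (a, False)]) q of None \<Rightarrow> 0
         | Some r \<Rightarrow> if x = t[j := r] then 1 else 0)) x)"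
    (is "_ = ?R") by (rule ext) (simp add: rel_gen_def)
  moreover have "fs ?R"
  proof (rule fs_sum[OF True])
    fix a
    have "fs (\<lambda>x. 1 * (case pcat3 src tgt p (src a, [(a, False), (a, True)]) q of None \<Rightarrow> 0
         | Some r \<Rightarrow> if x = t[j := r] then 1 else 0) +
     (-1) * (case pcat3 src tgt p (tgt a, [(a, True), (a, False)]) q of None \<Rightarrow> 0
         | Some r \<Rightarrow> if x = t[j := r] then 1 else 0))" (is "fs (\<lambda>x. 1 * ?A x + (-1) * ?B x)")
      using fs_sum[of "{True, False}" "\<lambda>b. if b then ?A else ?B" "\<lambda>b. if b then 1 else -1"]
      by (simp add: fs_case)
    then show "fs (\<lambda>x. ?A x - ?B x)" by simp
  qed
  ultimately show ?thesis by simp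
next
  case False
  then show ?thesis by (simp add: rel_gen_def fs_def)
qed

lemma ins_upd:
  assumes "k \<le> length t" "j < length t"
  shows "ins (t[j := r]) k v = (ins t k v)[(if j < k then j else Suc j) := r]"
proof (rule nth_equalityI)
  show "length (ins (t[j := r]) k v) = length ((ins t k v)[(if j < k then j else Suc j) := r])"
    using assms by simp
  fix i assume "i < length (ins (t[j := r]) k v)"
  then have i: "i < Suc (length t)" using assms by simp
  have k2: "k \<le> length (t[j := r])" using assms by simp
  show "ins (t[j := r]) k v ! i = (ins t k v)[(if j < k then j else Suc j) := r] ! i"
    unfolding nth_ins[OF k2] using assms i by (auto simp: nth_list_update nth_ins)
qed



lemma Hop_case:
  assumes "j < length t"
  shows "(case P of None \<Rightarrow> 0 | Some r \<Rightarrow> Hop I c (t[j := r]) u) =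
    (\<Sum>k\<in>{1..length t}. \<Sum>v\<in>I. ((-1) ^ k * c v) *
       (case P of None \<Rightarrow> 0 | Some r \<Rightarrow> if u = (ins t k v)[(if j < k then j else Suc j) := r] then 1 else 0))"
proof (cases P)
  case None then show ?thesis by simp
next
  case (Some r)
  show ?thesis unfolding Some Hop_def option.case length_list_update
    by (rule sum.cong[OF refl], rule sum.cong[OF refl]) (use assms in \<open>auto simp: ins_upd sng_def\<close>)
qed

lemma lin_Hop_rel:
  assumes fA: "finite Arr" and j: "j < length t"
  shows "lin (Hop I c) (rel_gen Arr src tgt t j p q) u =
    (\<Sum>k\<in>{1..length t}. \<Sum>v\<in>I. ((-1) ^ k * c v) *
       rel_gen Arr src tgt (ins t k v) (if j < k then j else Suc j) p q u)"
proof -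
  define P1 where "P1 a = pcat3 src tgt p (src a, [(a, False), (a, True)]) q" for a
  define P2 where "P2 a = pcat3 src tgt p (tgt a, [(a, True), (a, False)]) q" for a
  define A1 where "A1 a x = (case P1 a of None \<Rightarrow> 0 | Some r \<Rightarrow> if x = t[j := r] then (1::complex) else 0)" for a x
  define A2 where "A2 a x = (case P2 a of None \<Rightarrow> 0 | Some r \<Rightarrow> if x = t[j := r] then (1::complex) else 0)" for a x
  define jj where "jj k = (if j < k then j else Suc j)" for k
  define Y1 where "Y1 k v a = (case P1 a of None \<Rightarrow> 0 | Some r \<Rightarrow> if u = (ins t k v)[jj k := r] then (1::complex) else 0)" for k v a
  define Y2 where "Y2 k v a = (case P2 a of None \<Rightarrow> 0 | Some r \<Rightarrow> if u = (ins t k v)[jj k := r] then (1::complex) else 0)" for k v a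
  have g: "rel_gen Arr src tgt t j p q = (\<lambda>x. \<Sum>a\<in>Arr. 1 * (\<lambda>x. A1 a x - A2 a x) x)"
    by (rule ext) (simp add: rel_gen_def A1_def A2_def P1_def P2_def)
  have "lin (Hop I c) (rel_gen Arr src tgt t j p q) u = (\<Sum>a\<in>Arr. 1 * lin (Hop I c) (\<lambda>x. A1 a x - A2 a x) u)"
    unfolding g
  proof (rule lin_sum[OF fA])
    fix a
    have f1: "fs (\<lambda>x. A1 a x)" "fs (\<lambda>x. A2 a x)" unfolding A1_def A2_def by (rule fs_case)+
    have "fs (\<lambda>x. \<Sum>b\<in>{True, False}. (if b then 1 else -1) * (if b then A1 a else A2 a) x)"
      by (rule fs_sum) (use f1 in \<open>auto simp: eta_contract_eq\<close>)
    then show "fs (\<lambda>x. A1 a x - A2 a x)" by simp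
  qed
  also have "\<dots> = (\<Sum>a\<in>Arr. (case P1 a of None \<Rightarrow> 0 | Some r \<Rightarrow> Hop I c (t[j := r]) u)
      - (case P2 a of None \<Rightarrow> 0 | Some r \<Rightarrow> Hop I c (t[j := r]) u))"
    unfolding A1_def A2_def by (simp add: lin_diff fs_case lin_case)
  also have "\<dots> = (\<Sum>a\<in>Arr. (\<Sum>k\<in>{1..length t}. \<Sum>v\<in>I. ((-1) ^ k * c v) * Y1 k v a)
      - (\<Sum>k\<in>{1..length t}. \<Sum>v\<in>I. ((-1) ^ k * c v) * Y2 k v a))"
    unfolding Y1_def Y2_def jj_def by (simp add: Hop_case[OF j])
  also have "\<dots> = (\<Sum>k\<in>{1..length t}. \<Sum>v\<in>I. ((-1) ^ k * c v) * (\<Sum>a\<in>Arr. Y1 k v a - Y2 k v a))"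
    by (simp add: sum_subtractf sum_distrib_left right_diff_distrib sum.swap[of _ Arr])
  also have "\<dots> = (\<Sum>k\<in>{1..length t}. \<Sum>v\<in>I. ((-1) ^ k * c v) *
       rel_gen Arr src tgt (ins t k v) (jj k) p q u)"
    unfolding Y1_def Y2_def rel_gen_def P1_def P2_def by simp
  finally show ?thesis unfolding jj_def .
qed



lemma set_ins: "set (ins t k v) = insert (v, []) (set t)"
proof -
  have "set t = set (take k t) \<union> set (drop k t)" by (metis append_take_drop_id set_append)
  then show ?thesis by (auto simp: ins_def)
qed

lemma valid_triv: "v \<in> I \<Longrightarrow> valid_path I Arr src tgt (v, [])"
  by (simp add: valid_path_def)

lemma fs_Hop: "finite I \<Longrightarrow> fs (Hop I c t)"
proof -
  assume fI: "finite I"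
  have "Hop I c t = (\<lambda>x. \<Sum>k\<in>{1..length t}. 1 * (\<lambda>x. \<Sum>v\<in>I. ((-1) ^ k * c v) * sng (ins t k v) x) x)"
    (is "_ = ?R") by (rule ext) (simp add: Hop_def)
  moreover have "fs ?R"
    by (rule fs_sum) (simp_all add: fs_sum[OF fI fs_sng])
  ultimately show ?thesis by simp
qed

lemma fs_bterm: "t \<noteq> [] \<Longrightarrow> fs (bterm src tgt t)"
proof -
  assume ne: "t \<noteq> []"
  have "bterm src tgt t = (\<lambda>x. \<Sum>j<length t. bet src tgt t j * sng (rho t j) x)"
    (is "_ = ?R") by (rule ext) (simp add: bterm_eq[OF ne])
  moreover have "fs ?R" by (rule fs_sum) (simp_all add: fs_sng)
  ultimately show ?thesis by simp
qed

lemma hbnd_lin: "hbnd src tgt y = lin (bterm src tgt) y"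
  by (rule ext) (simp add: hbnd_def lin_def)

lemma Hop_rel_span:
  assumes g: "g \<in> rel_span I Arr src tgt n'"
  shows "in_span (rel_span I Arr src tgt (Suc n')) (lin (Hop I c) g)"
proof -
  obtain t j p q where gd: "g = rel_gen Arr src tgt t j p q" and lt: "length t = Suc n'" and j: "j \<le> n'"
    and vt: "\<forall>x\<in>set t. valid_path I Arr src tgt x" and vp: "valid_path I Arr src tgt p"
    and vq: "valid_path I Arr src tgt q"
    using g unfolding rel_span_def by blast
  show ?thesis
  proof (cases "finite Arr")
    case False
    then have "g = (\<lambda>_. 0)" unfolding gd by (rule_tac ext) (simp add: rel_gen_def)
    then show ?thesis by (intro in_span_cong[OF in_span_zero]) (simp add: lin_zero)
  next
    case True
    have jl: "j < length t" using lt j by simp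
    define jj where "jj k = (if j < k then j else Suc j)" for k
    have "in_span (rel_span I Arr src tgt (Suc n')) (\<lambda>u. \<Sum>k\<in>{1..length t}. 1 * (\<lambda>u. \<Sum>v\<in>I. ((-1) ^ k * c v) *
       rel_gen Arr src tgt (ins t k v) (jj k) p q u) u)"
    proof (rule in_span_sum, simp)
      fix k assume k: "k \<in> {1..length t}"
      show "in_span (rel_span I Arr src tgt (Suc n')) (\<lambda>u. \<Sum>v\<in>I. ((-1) ^ k * c v) * rel_gen Arr src tgt (ins t k v) (jj k) p q u)"
      proof (cases "finite I")
        case False then show ?thesis by (simp add: in_span_zero)
      next
        case fI: True
        show ?thesis
        proof (rule in_span_sum[OF fI])
          fix v assume v: "v \<in> I"
          show "in_span (rel_span I Arr src tgt (Suc n')) (rel_gen Arr src tgt (ins t k v) (jj k) p q)"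
          proof (rule in_span_gen)
            have "length (ins t k v) = Suc (Suc n')" using k lt by simp
            moreover have "jj k \<le> Suc n'" using j by (simp add: jj_def)
            moreover have "\<forall>x\<in>set (ins t k v). valid_path I Arr src tgt x"
              using vt v by (simp add: set_ins valid_triv)
            ultimately show "rel_gen Arr src tgt (ins t k v) (jj k) p q \<in> rel_span I Arr src tgt (Suc n')"
              unfolding rel_span_def using vp vq by blast
          qed
        qed
      qed
    qed
    then show ?thesis
      by (rule in_span_cong) (simp add: gd lin_Hop_rel[OF True jl] jj_def)
  qed
qed



theorem mainTheorem1:
  fixes I :: "'v set" and Arr :: "'a set" and src tgt :: "'a \<Rightarrow> 'v"
    and n d :: nat and z :: "('v, 'a) chain"
  assumes "dynkin_quiver I Arr src tgt"
    and "is_chain I Arr src tgt n z"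
    and "homog d z"
    and "n = 0 \<or> in_span (rel_span I Arr src tgt (n - 1)) (hbnd src tgt z)"
  shows "\<exists>w. is_chain I Arr src tgt (Suc n) w \<and>
           in_span (rel_span I Arr src tgt n)
             (\<lambda>u. lie_D z u - (of_nat d / 2) * z u - hbnd src tgt w u)"
proof -
  have srcI: "\<forall>a\<in>Arr. src a \<in> I \<and> tgt a \<in> I" using assms(1) by (simp add: dynkin_quiver_def)
  obtain c :: "'v \<Rightarrow> complex" where pot: "\<forall>a\<in>Arr. c (tgt a) = c (src a) + 1/2"
    using potential[OF assms(1)] by blast
  have fI: "finite I" using finite_I[OF assms(1)] .
  define Z where "Z = {t. z t \<noteq> 0}"
  have fZ: "finite Z" using assms(2) by (simp add: is_chain_def Z_def)
  have zl: "length t = Suc n" "\<forall>p\<in>set t. valid_path I Arr src tgt p" if "t \<in> Z" for t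
    using assms(2) that by (auto simp: is_chain_def Z_def)
  have zne: "t \<noteq> []" if "t \<in> Z" for t using zl[OF that] by auto
  have inI: "\<forall>j<length t. endv src tgt (t ! j) \<in> I \<and> fst (t ! j) \<in> I" if "t \<in> Z" for t
    using zl(2)[OF that] valid_end_in[OF srcI] by (meson nth_mem)
  define w where "w = lin (Hop I c) z"
  have wZ: "w u = (\<Sum>t\<in>Z. z t * Hop I c t u)" for u by (simp add: w_def lin_def Z_def)
  have wsupp: "{u. w u \<noteq> 0} \<subseteq> (\<Union>t\<in>Z. \<Union>k\<in>{1..length t}. \<Union>v\<in>I. {ins t k v})"
  proof
    fix u assume "u \<in> {u. w u \<noteq> 0}"
    then obtain t where t: "t \<in> Z" "z t * Hop I c t u \<noteq> 0" unfolding wZ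
      by (metis (mono_tags, lifting) mem_Collect_eq sum.neutral)
    then have "Hop I c t u \<noteq> 0" by simp
    then obtain k where k: "k \<in> {1..length t}" "(\<Sum>v\<in>I. ((-1) ^ k * c v) * sng (ins t k v) u) \<noteq> 0"
      unfolding Hop_def by (metis (mono_tags, lifting) sum.neutral)
    then obtain v where v: "v \<in> I" "((-1) ^ k * c v) * sng (ins t k v) u \<noteq> 0"
      by (metis (mono_tags, lifting) sum.neutral)
    then have "u = ins t k v" by (simp add: sng_def split: if_splits)
    then show "u \<in> (\<Union>t\<in>Z. \<Union>k\<in>{1..length t}. \<Union>v\<in>I. {ins t k v})" using t k v by blast
  qed
  have wchain: "is_chain I Arr src tgt (Suc n) w"
    unfolding is_chain_def
  proof (intro conjI allI impI)
    show "finite {t. w t \<noteq> 0}" by (rule finite_subset[OF wsupp]) (simp add: fZ fI)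
    fix u assume "w u \<noteq> 0"
    then obtain t k v where t: "t \<in> Z" "k \<in> {1..length t}" "v \<in> I" "u = ins t k v" using wsupp by blast
    show "length u = Suc (Suc n)" using t zl[OF t(1)] by simp
    show "\<forall>p\<in>set u. valid_path I Arr src tgt p" using t zl[OF t(1)] by (simp add: set_ins valid_triv)
  qed
  have ident: "lie_D z u - (of_nat d / 2) * z u - hbnd src tgt w u = lin (Hop I c) (hbnd src tgt z) u" for u
  proof -
    have w': "w = (\<lambda>x. \<Sum>t\<in>Z. z t * Hop I c t x)" by (rule ext) (simp add: wZ)
    have hz: "hbnd src tgt z = (\<lambda>x. \<Sum>t\<in>Z. z t * bterm src tgt t x)"
      by (rule ext) (simp add: hbnd_def Z_def)
    have A: "hbnd src tgt w u = (\<Sum>t\<in>Z. z t * lin (bterm src tgt) (Hop I c t) u)"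
      unfolding hbnd_lin w' by (rule lin_sum[OF fZ fs_Hop[OF fI]])
    have B: "lin (Hop I c) (hbnd src tgt z) u = (\<Sum>t\<in>Z. z t * lin (Hop I c) (bterm src tgt t) u)"
      unfolding hz by (rule lin_sum[OF fZ fs_bterm[OF zne]])
    have C: "hbnd src tgt w u + lin (Hop I c) (hbnd src tgt z) u = (\<Sum>t\<in>Z. z t * (delta src tgt c t * sng t u))"
      unfolding A B sum.distrib[symmetric] distrib_left[symmetric]
      by (rule sum.cong[OF refl]) (simp add: Key[OF fI zne inI])
    also have "\<dots> = delta src tgt c u * z u"
    proof (cases "u \<in> Z")
      case True
      have "(\<Sum>t\<in>Z. z t * (delta src tgt c t * sng t u)) = (\<Sum>t\<in>Z. if t = u then z u * delta src tgt c u else 0)"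
        by (rule sum.cong[OF refl]) (auto simp: sng_def)
      then show ?thesis using True fZ by (simp add: mult.commute)
    next
      case False
      then have "z u = 0" by (simp add: Z_def)
      moreover have "(\<Sum>t\<in>Z. z t * (delta src tgt c t * sng t u)) = 0"
        by (rule sum.neutral) (use False in \<open>auto simp: sng_def\<close>)
      ultimately show ?thesis by simp
    qed
    finally have C': "hbnd src tgt w u + lin (Hop I c) (hbnd src tgt z) u = delta src tgt c u * z u" .
    have D: "lie_D z u - (of_nat d / 2) * z u = delta src tgt c u * z u"
    proof (cases "u \<in> Z")
      case True
      have "tdeg u = d" using assms(3) True by (simp add: homog_def Z_def)
      then have "of_nat (star_count u) - of_nat d / 2 = delta src tgt c u"
        using delta_eq[where c=c and Arr=Arr and src=src and tgt=tgt, OF pot zl(2)[OF True]] by simp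
      then have "(of_nat (star_count u) - of_nat d / 2) * z u = delta src tgt c u * z u" by simp
      then show ?thesis unfolding lie_D_def by (simp add: algebra_simps)
    next
      case False
      then show ?thesis by (simp add: Z_def lie_D_def)
    qed
    show ?thesis using C' D by (simp add: algebra_simps)
  qed
  have span: "in_span (rel_span I Arr src tgt n) (\<lambda>u. lin (Hop I c) (hbnd src tgt z) u)"
  proof (cases "n = 0")
    case True
    have "hbnd src tgt z = (\<lambda>_. 0)"
    proof
      fix u
      have "bterm src tgt t u = 0" if "t \<in> Z" for t
        using zl(1)[OF that] True by (simp add: bterm_def)
      then show "hbnd src tgt z u = 0" by (simp add: hbnd_def Z_def)
    qed
    then show ?thesis by (simp add: lin_zero in_span_zero)
  next
    case False
    then obtain S cg where S: "finite S" "S \<subseteq> rel_span I Arr src tgt (n - 1)"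
      "hbnd src tgt z = (\<lambda>u. \<Sum>g\<in>S. cg g * g u)"
      using assms(4) unfolding in_span_def by blast
    have fsg: "fs g" if "g \<in> S" for g
      using S(2) that unfolding rel_span_def by (auto simp: fs_rel_gen)
    have "in_span (rel_span I Arr src tgt (Suc (n - 1))) (\<lambda>u. \<Sum>g\<in>S. cg g * lin (Hop I c) g u)"
      by (rule in_span_sum[OF S(1)]) (use S(2) in \<open>auto intro: Hop_rel_span\<close>)
    moreover have "Suc (n - 1) = n" using False by simp
    ultimately show ?thesis unfolding S(3) by (simp add: lin_sum[OF S(1) fsg])
  qed
  show ?thesis
    by (rule exI[of _ w], rule conjI[OF wchain], rule in_span_cong[OF span]) (simp only: ident)
qed


end
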